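(* Let $X$ be a regular Lusin space and let $f:X\to\mathbb{R}$ be quasicontinuous. Then the set $D_f=\{x\in X: f \text{ is discontinuous at } x\}$ is countable.
   Context: All spaces are assumed regular. A Hausdorff space $X$ is a Lusin space (in the sense of Kunen) if (a) every nowhere dense subset of $X$ is countable, (b) $X$ has at most countably many isolated points, and (c) $X$ is uncountable. A function $f:X\to Y$ is quasicontinuous if for every $x\in X$, every open $V\ni f(x)$ and every open $U\ni x$ there is a nonempty open $W\subseteq U$ with $f(W)\subseteq V$. *)

theory Defs
  imports "HOL-Analysis.Analysis"
begin

definition nowhere_dense_in :: "'a topology \<Rightarrow> 'a set \<Rightarrow> bool" where
  "nowhere_dense_in X S \<longleftrightarrow> S \<subseteq> topspace X \<and> X interior_of (X closure_of S) = {}"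

definition isolated_points_of :: "'a topology \<Rightarrow> 'a set" where
  "isolated_points_of X = {x \<in> topspace X. openin X {x}}"

definition Lusin_space :: "'a topology \<Rightarrow> bool" where
  "Lusin_space X \<longleftrightarrow> Hausdorff_space X
     \<and> (\<forall>S. nowhere_dense_in X S \<longrightarrow> countable S)
     \<and> countable (isolated_points_of X)
     \<and> uncountable (topspace X)"

definition continuous_at_pt :: "'a topology \<Rightarrow> ('a \<Rightarrow> real) \<Rightarrow> 'a \<Rightarrow> bool" where
  "continuous_at_pt X f x \<longleftrightarrow>
     (\<forall>V. open V \<and> f x \<in> V \<longrightarrow> (\<exists>U. openin X U \<and> x \<in> U \<and> f ` U \<subseteq> V))"

definition quasicontinuous_on :: "'a topology \<Rightarrow> ('a \<Rightarrow> real) \<Rightarrow> bool" where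
  "quasicontinuous_on X f \<longleftrightarrow>
     (\<forall>x \<in> topspace X. \<forall>V U. open V \<and> f x \<in> V \<and> openin X U \<and> x \<in> U \<longrightarrow>
        (\<exists>W. openin X W \<and> W \<noteq> {} \<and> W \<subseteq> U \<and> f ` W \<subseteq> V))"

end

theory Submission
  imports Defs
begin

lemma nd_boundary:
  assumes "openin X I"
  shows "nowhere_dense_in X (X closure_of I - I)"
proof -
  let ?C = "X closure_of I - I"
  have cl: "closedin X ?C" using assms by (simp add: closedin_diff)
  hence eq: "X closure_of ?C = ?C" by (simp add: closure_of_eq)
  have "X interior_of ?C = {}"
  proof (rule ccontr)
    assume "X interior_of ?C \<noteq> {}"
    then obtain x where x: "x \<in> X interior_of ?C" by blast
    have o: "openin X (X interior_of ?C)" by simp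
    have sub: "X interior_of ?C \<subseteq> ?C" by (rule interior_of_subset)
    with x have "x \<in> X closure_of I" by blast
    then obtain y where "y \<in> I" "y \<in> X interior_of ?C"
      using x o by (meson in_closure_of)
    with sub show False by blast
  qed
  moreover have "?C \<subseteq> topspace X" using closure_of_subset_topspace[of X I] by blast
  ultimately show ?thesis unfolding nowhere_dense_in_def eq by simp
qed

theorem corollary3p5:
  fixes X :: "'a topology" and f :: "'a \<Rightarrow> real"
  assumes "regular_space X" and "Lusin_space X" and "quasicontinuous_on X f"
  shows "countable {x \<in> topspace X. \<not> continuous_at_pt X f x}"
proof -
  define A where "A q = {x\<in>topspace X. f x \<in> {of_rat (fst q)<..<of_rat (snd q)}}" for q :: "rat \<times> rat"
  define I where "I q = X interior_of A q" for q
  define S where "S q = X closure_of I q - I q" for q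
  have cS: "countable (S q)" for q
    using assms(2) nd_boundary[of X "I q"] unfolding Lusin_space_def S_def I_def by simp
  have "{x \<in> topspace X. \<not> continuous_at_pt X f x} \<subseteq> (\<Union>q. S q)"
  proof
    fix x assume "x \<in> {x \<in> topspace X. \<not> continuous_at_pt X f x}"
    hence xt: "x \<in> topspace X" and nc: "\<not> continuous_at_pt X f x" by auto
    then obtain V where V: "open V" "f x \<in> V" and nU: "\<And>U. openin X U \<Longrightarrow> x \<in> U \<Longrightarrow> \<not> f ` U \<subseteq> V"
      unfolding continuous_at_pt_def by blast
    obtain e where e: "e > 0" "ball (f x) e \<subseteq> V" using V open_contains_ball by blast
    obtain a where a: "a \<in> \<rat>" "f x - e < a" "a < f x" using Rats_dense_in_real[of "f x - e" "f x"] e by auto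
    obtain b where b: "b \<in> \<rat>" "f x < b" "b < f x + e" using Rats_dense_in_real[of "f x" "f x + e"] e by auto
    obtain a' where a': "a = of_rat a'" using a(1) Rats_cases by blast
    obtain b' where b': "b = of_rat b'" using b(1) Rats_cases by blast
    define q where "q = (a', b')"
    have Vq: "{a<..<b} \<subseteq> V"
    proof
      fix z assume "z \<in> {a<..<b}"
      hence "z \<in> ball (f x) e" using a b by (auto simp: dist_real_def abs_if)
      thus "z \<in> V" using e by blast
    qed
    have xA: "x \<in> A q" using xt a b a' b' unfolding A_def q_def by auto
    have xnI: "x \<notin> I q"
    proof
      assume "x \<in> I q"
      moreover have "openin X (I q)" by (simp add: I_def)
      moreover have "f ` I q \<subseteq> V"
      proof -
        have "f ` A q \<subseteq> {a<..<b}" using a' b' unfolding A_def q_def by auto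
        moreover have "f ` I q \<subseteq> f ` A q" using interior_of_subset[of X "A q"] unfolding I_def by (rule image_mono)
        ultimately show ?thesis using Vq by (meson order_trans)
      qed
      ultimately show False using nU[of "I q"] by simp
    qed
    have "x \<in> X closure_of I q"
      unfolding in_closure_of
    proof (intro conjI xt allI impI)
      fix T assume T: "x \<in> T \<and> openin X T"
      have "open {a<..<b}" by simp
      then obtain W where W: "openin X W" "W \<noteq> {}" "W \<subseteq> T" "f ` W \<subseteq> {a<..<b}"
      proof -
        have fxab: "f x \<in> {a<..<b}" using a b by simp
        have "\<forall>V U. open V \<and> f x \<in> V \<and> openin X U \<and> x \<in> U \<longrightarrow>
          (\<exists>W. openin X W \<and> W \<noteq> {} \<and> W \<subseteq> U \<and> f ` W \<subseteq> V)"
          using assms(3) xt unfolding quasicontinuous_on_def by blast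
        hence "\<exists>W. openin X W \<and> W \<noteq> {} \<and> W \<subseteq> T \<and> f ` W \<subseteq> {a<..<b}"
          using fxab T \<open>open {a<..<b}\<close> by blast
        thus ?thesis using that by blast
      qed
      have "W \<subseteq> topspace X" using openin_subset[OF W(1)] .
      hence "W \<subseteq> A q" using W(4) a' b' unfolding A_def q_def by auto
      hence "W \<subseteq> I q" unfolding I_def using W(1) by (simp add: interior_of_maximal)
      thus "\<exists>y. y \<in> I q \<and> y \<in> T" using W by blast
    qed
    thus "x \<in> (\<Union>q. S q)" using xnI unfolding S_def by blast
  qed
  moreover have "countable (\<Union>q. S q)" using cS by auto
  ultimately show ?thesis using countable_subset by blast
qed

end
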